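(* There is an absolute constant $C>0$ such that the following holds. Let $U^*,S,p_{ijk},\widehat p_{ijk},\mathcal{W}_{ijk},\delta_{ijk}$ be as in the context, and let $U\in\mathbb{R}^{n\times r}$ be fixed (independent of $\delta$) with unit-norm columns and $|U_{il}|\le2\|(U^* )^i\|$ for all $i,l$. Fix $q\in[r]$ and unit vectors $a,b,c\in\mathbb{R}^n$ with $|a_i|,|b_i|,|c_i|\le2\|(U^* )^i\|$ for all $i$. Let $B,R$ be the $n\times n$ diagonal matrices with $B_{ii}=\sum_{j,k}\delta_{ijk}\mathcal{W}_{ijk}U_{jq}^2U_{kq}^2$ and $R_{ii}=\sum_{j,k}\delta_{ijk}\mathcal{W}_{ijk}U_{jq}U_{kq}a_jb_k$. Let $\gamma\in(0,1]$. If $m\ge\frac{C}{\gamma^2}n\log(n)S^2$, then with probability at least $1-2n^{-9}$, $$\big\|(\langle U_q,a\rangle\langle U_q,b\rangle B-R)c\big\|\le\gamma\|b\|.$$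
   Context: $U^*\in\mathbb{R}^{n\times r}$ has orthonormal columns $U^*_l$ and rows $(U^* )^i$; $S=\sum_i\|(U^* )^i\|^{3/2}$; $p_{ijk}=\frac{\|(U^* )^i\|^{3/2}\|(U^* )^j\|^{3/2}+\|(U^* )^j\|^{3/2}\|(U^* )^k\|^{3/2}+\|(U^* )^k\|^{3/2}\|(U^* )^i\|^{3/2}}{3nS^2}$; $\widehat p_{ijk}=\min\{mp_{ijk},1\}$; $\mathcal{W}_{ijk}=1/\widehat p_{ijk}$ if $\widehat p_{ijk}>0$, else $0$; $\delta_{ijk}$ are independent Bernoulli$(\widehat p_{ijk})$ random variables. *)

theory Defs
  imports "HOL-Analysis.Analysis" "HOL-Probability.Probability"
begin

text \<open>Matrices are functions nat => nat => real, indexed from 0; an n x r matrix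
  uses entries with row index < n and column index < r.  Vectors in R^n are
  functions nat => real with components indexed by i < n.\<close>

definition vnorm :: "nat \<Rightarrow> (nat \<Rightarrow> real) \<Rightarrow> real" where
  "vnorm n x = sqrt (\<Sum>i<n. (x i)\<^sup>2)"

definition vinner :: "nat \<Rightarrow> (nat \<Rightarrow> real) \<Rightarrow> (nat \<Rightarrow> real) \<Rightarrow> real" where
  "vinner n x y = (\<Sum>i<n. x i * y i)"

definition row_norm :: "nat \<Rightarrow> (nat \<Rightarrow> nat \<Rightarrow> real) \<Rightarrow> nat \<Rightarrow> real" where
  "row_norm r M i = sqrt (\<Sum>l<r. (M i l)\<^sup>2)"

definition orthonormal_cols :: "nat \<Rightarrow> nat \<Rightarrow> (nat \<Rightarrow> nat \<Rightarrow> real) \<Rightarrow> bool" where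
  "orthonormal_cols n r M \<longleftrightarrow>
     (\<forall>l<r. \<forall>l'<r. (\<Sum>i<n. M i l * M i l') = (if l = l' then 1 else 0))"

definition Ssum :: "nat \<Rightarrow> nat \<Rightarrow> (nat \<Rightarrow> nat \<Rightarrow> real) \<Rightarrow> real" where
  "Ssum n r Us = (\<Sum>i<n. row_norm r Us i powr (3/2))"

definition pprob :: "nat \<Rightarrow> nat \<Rightarrow> (nat \<Rightarrow> nat \<Rightarrow> real) \<Rightarrow> nat \<Rightarrow> nat \<Rightarrow> nat \<Rightarrow> real" where
  "pprob n r Us i j k =
     (row_norm r Us i powr (3/2) * row_norm r Us j powr (3/2)
      + row_norm r Us j powr (3/2) * row_norm r Us k powr (3/2)
      + row_norm r Us k powr (3/2) * row_norm r Us i powr (3/2))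
     / (3 * real n * (Ssum n r Us)\<^sup>2)"

definition phat :: "nat \<Rightarrow> nat \<Rightarrow> (nat \<Rightarrow> nat \<Rightarrow> real) \<Rightarrow> real \<Rightarrow> nat \<Rightarrow> nat \<Rightarrow> nat \<Rightarrow> real" where
  "phat n r Us m i j k = min (m * pprob n r Us i j k) 1"

definition Wt :: "nat \<Rightarrow> nat \<Rightarrow> (nat \<Rightarrow> nat \<Rightarrow> real) \<Rightarrow> real \<Rightarrow> nat \<Rightarrow> nat \<Rightarrow> nat \<Rightarrow> real" where
  "Wt n r Us m i j k = (if phat n r Us m i j k > 0 then 1 / phat n r Us m i j k else 0)"

definition delta_pmf :: "nat \<Rightarrow> nat \<Rightarrow> (nat \<Rightarrow> nat \<Rightarrow> real) \<Rightarrow> real \<Rightarrow> (nat \<times> nat \<times> nat \<Rightarrow> bool) pmf" where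
  "delta_pmf n r Us m =
     Pi_pmf ({..<n} \<times> {..<n} \<times> {..<n}) False
       (\<lambda>(i, j, k). bernoulli_pmf (phat n r Us m i j k))"

definition Bdiag where
  "Bdiag n r Us m U q \<delta> i =
     (\<Sum>j<n. \<Sum>k<n. of_bool (\<delta> (i, j, k)) * Wt n r Us m i j k * (U j q)\<^sup>2 * (U k q)\<^sup>2)"

definition Rdiag where
  "Rdiag n r Us m U q a b \<delta> i =
     (\<Sum>j<n. \<Sum>k<n. of_bool (\<delta> (i, j, k)) * Wt n r Us m i j k * U j q * U k q * a j * b k)"

end

theory Submission
  imports Defs
begin


lemma pos_quad: fixes v::real shows "0 < 1 - v + v\<^sup>2"
proof -
  have e: "4 * (1 - v + v\<^sup>2) = (2 * v - 1)\<^sup>2 + 3" by (simp add: power2_eq_square algebra_simps)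
  have "0 < (2 * v - 1)\<^sup>2 + 3" by (simp add: add_nonneg_pos)
  then have "0 < 4 * (1 - v + v\<^sup>2)" by (simp only: e)
  then show ?thesis by simp
qed

lemma exp_neg_bound:
  fixes v :: real assumes "0 \<le> v" shows "exp (-v) \<le> 1 - v + v\<^sup>2"
proof -
  have q: "1 + v + v\<^sup>2/2 \<le> exp v" by (rule exp_lower_Taylor_quadratic) fact
  have pos: "0 < 1 - v + v\<^sup>2" by (rule pos_quad)
  have id: "(1 - v + v\<^sup>2) * (2 + 2 * v + v\<^sup>2) = 2 + v\<^sup>2 + v^3 + v^4"
    by (simp add: algebra_simps power2_eq_square power3_eq_cube power4_eq_xxxx)
  have "2 \<le> (1 - v + v\<^sup>2) * (2 + 2 * v + v\<^sup>2)"
    unfolding id using assms by simp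
  also have "\<dots> \<le> (1 - v + v\<^sup>2) * (2 * exp v)" using q pos by (intro mult_left_mono) auto
  finally have "1 \<le> (1 - v + v\<^sup>2) * exp v" by simp
  then show ?thesis by (simp add: exp_minus field_simps)
qed

lemma exp_quad_bound:
  fixes u :: real assumes "\<bar>u\<bar> \<le> 1" shows "exp u \<le> 1 + u + u\<^sup>2"
proof (cases "u \<ge> 0")
  case True then show ?thesis using exp_bound[of u] assms by simp
next
  case False
  then show ?thesis using exp_neg_bound[of "-u"] by simp
qed

lemma factor_bound:
  fixes P s l :: real
  assumes "0 \<le> P" "P \<le> 1" "\<bar>l * s\<bar> \<le> 1"
  shows "P * exp (l * ((1 - P) * s)) + (1 - P) * exp (l * ((0 - P) * s)) \<le> exp (l\<^sup>2 * (P * s\<^sup>2))"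
proof -
  define u where "u = l * s"
  have e: "exp u \<le> 1 + u + u\<^sup>2" using exp_quad_bound assms u_def by auto
  have a1: "l * ((1 - P) * s) = -(P*u) + u" by (simp add: u_def algebra_simps)
  have a2: "l * ((0 - P) * s) = -(P*u)" by (simp add: u_def algebra_simps)
  have "P * exp (l * ((1 - P) * s)) + (1 - P) * exp (l * ((0 - P) * s))
      = exp (- (P*u)) * (1 - P + P * exp u)"
    unfolding a1 a2 exp_add by (simp add: algebra_simps)
  also have "\<dots> \<le> exp (- (P*u)) * (1 + P*u + P * u\<^sup>2)"
  proof (intro mult_left_mono)
    have "P * exp u \<le> P * (1 + u + u\<^sup>2)" using e assms by (intro mult_left_mono) auto
    then show "1 - P + P * exp u \<le> 1 + P*u + P * u\<^sup>2" by (simp add: algebra_simps)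
  qed auto
  also have "\<dots> \<le> exp (- (P*u)) * exp (P*u + P*u\<^sup>2)"
    using exp_ge_add_one_self[of "P*u + P*u\<^sup>2"] by (intro mult_left_mono) (auto simp: add.assoc)
  also have "\<dots> = exp (- (P*u) + (P*u + P*u\<^sup>2))"
    by (simp only: exp_add)
  also have "- (P*u) + (P*u + P*u\<^sup>2) = l\<^sup>2 * (P * s\<^sup>2)"
    by (simp add: u_def power_mult_distrib)
  finally show ?thesis .
qed

lemma chernoff_pi:
  fixes A :: "'a set" and P s :: "'a \<Rightarrow> real" and l \<epsilon> :: real
  assumes fin: "finite A" and P: "\<And>x. x\<in>A \<Longrightarrow> 0 \<le> P x \<and> P x \<le> 1"
    and l: "l > 0" and ls: "\<And>x. x\<in>A \<Longrightarrow> P x < 1 \<Longrightarrow> \<bar>l * s x\<bar> \<le> 1"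
  shows "measure_pmf.prob (Pi_pmf A False (\<lambda>x. bernoulli_pmf (P x)))
           {\<delta>. (\<Sum>x\<in>A. (of_bool (\<delta> x) - P x) * s x) \<ge> \<epsilon>}
     \<le> exp (l\<^sup>2 * (\<Sum>x\<in>A. if P x < 1 then P x * (s x)\<^sup>2 else 0) - l * \<epsilon>)"
proof -
  define D where "D = Pi_pmf A False (\<lambda>x. bernoulli_pmf (P x))"
  define Z where "Z = (\<lambda>\<delta>. (\<Sum>x\<in>A. (of_bool (\<delta> x) - P x) * s x))"
  have finD: "finite (set_pmf D)"
    unfolding D_def
    by (rule finite_subset[OF set_Pi_pmf_subset'[OF fin]]) (intro finite_PiE_dflt fin, auto)
  have int: "integrable (measure_pmf D) f" for f :: "_ \<Rightarrow> real"
    by (rule integrable_measure_pmf_finite[OF finD])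
  have "{\<delta>. Z \<delta> \<ge> \<epsilon>} = {\<delta> \<in> space (measure_pmf D). exp (l * Z \<delta>) \<ge> exp (l * \<epsilon>)}"
    using l by auto
  hence mk: "measure_pmf.prob D {\<delta>. Z \<delta> \<ge> \<epsilon>} \<le> (\<integral>\<delta>. exp (l * Z \<delta>) \<partial>D) / exp (l * \<epsilon>)"
    by (simp only:) (intro integral_Markov_inequality_measure[OF int] AE_pmfI, auto)
  have "(\<integral>\<delta>. exp (l * Z \<delta>) \<partial>D) = (\<integral>\<delta>. (\<Prod>x\<in>A. (\<lambda>x b. exp (l * ((of_bool b - P x) * s x))) x (\<delta> x)) \<partial>D)"
    unfolding Z_def by (simp add: sum_distrib_left exp_sum fin)
  also have "\<dots> = (\<Prod>x\<in>A. (\<integral>b. exp (l * ((of_bool b - P x) * s x)) \<partial>bernoulli_pmf (P x)))"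
    unfolding D_def by (rule expectation_prod_Pi_pmf[OF fin]) (auto intro: integrable_measure_pmf_finite)
  also have "\<dots> \<le> (\<Prod>x\<in>A. exp (l\<^sup>2 * (if P x < 1 then P x * (s x)\<^sup>2 else 0)))"
  proof (intro prod_mono conjI)
    fix x assume x: "x \<in> A"
    show "0 \<le> (\<integral>b. exp (l * ((of_bool b - P x) * s x)) \<partial>bernoulli_pmf (P x))"
      by (intro Bochner_Integration.integral_nonneg) auto
    show "(\<integral>b. exp (l * ((of_bool b - P x) * s x)) \<partial>bernoulli_pmf (P x)) \<le> exp (l\<^sup>2 * (if P x < 1 then P x * (s x)\<^sup>2 else 0))"
    proof (cases "P x < 1")
      case True
      then show ?thesis using P[OF x] factor_bound[of "P x" l "s x"] ls[OF x True]
        by (simp add: algebra_simps)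
    next
      case False
      then have "P x = 1" using P[OF x] by auto
      then show ?thesis by simp
    qed
  qed
  also have "\<dots> = exp (l\<^sup>2 * (\<Sum>x\<in>A. if P x < 1 then P x * (s x)\<^sup>2 else 0))"
    by (simp add: exp_sum fin sum_distrib_left)
  finally have "(\<integral>\<delta>. exp (l * Z \<delta>) \<partial>D) \<le> exp (l\<^sup>2 * (\<Sum>x\<in>A. if P x < 1 then P x * (s x)\<^sup>2 else 0))" .
  hence "measure_pmf.prob D {\<delta>. Z \<delta> \<ge> \<epsilon>} \<le> exp (l\<^sup>2 * (\<Sum>x\<in>A. if P x < 1 then P x * (s x)\<^sup>2 else 0)) / exp (l * \<epsilon>)"
    using mk by (meson divide_right_mono exp_ge_zero order_trans)
  also have "exp (l\<^sup>2 * (\<Sum>x\<in>A. if P x < 1 then P x * (s x)\<^sup>2 else 0)) / exp (l * \<epsilon>)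
     = exp (l\<^sup>2 * (\<Sum>x\<in>A. if P x < 1 then P x * (s x)\<^sup>2 else 0) - l * \<epsilon>)"
    by (rule exp_diff[symmetric])
  finally show ?thesis
    unfolding D_def Z_def .
qed




lemma powr32: "0 \<le> (x::real) \<Longrightarrow> x powr (3/2) = x * sqrt x"
proof -
  assume x: "0 \<le> x"
  have "x powr (3/2) = x powr (1 + 1/2)" by simp
  also have "\<dots> = x powr 1 * x powr (1/2)" by (rule powr_add)
  also have "\<dots> = x * sqrt x" using x by (cases "x = 0") (simp_all add: powr_half_sqrt)
  finally show ?thesis .
qed

lemma amgm_abs: "\<bar>(x::real) * y\<bar> \<le> (x\<^sup>2 + y\<^sup>2) / 2"
proof -
  have "0 \<le> (\<bar>x\<bar> - \<bar>y\<bar>)\<^sup>2" by simp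
  also have "(\<bar>x\<bar> - \<bar>y\<bar>)\<^sup>2 = x\<^sup>2 + y\<^sup>2 - 2 * \<bar>x * y\<bar>"
    by (simp add: power2_eq_square algebra_simps abs_mult)
  finally show ?thesis by simp
qed

lemma sum_abs_prod_le1:
  fixes x y :: "nat \<Rightarrow> real"
  assumes "(\<Sum>j<n. (x j)\<^sup>2) = 1" "(\<Sum>j<n. (y j)\<^sup>2) = 1"
  shows "(\<Sum>j<n. \<bar>x j * y j\<bar>) \<le> 1"
proof -
  have "(\<Sum>j<n. \<bar>x j * y j\<bar>) \<le> (\<Sum>j<n. ((x j)\<^sup>2 + (y j)\<^sup>2) / 2)"
    by (intro sum_mono amgm_abs)
  also have "\<dots> = ((\<Sum>j<n. (x j)\<^sup>2) + (\<Sum>j<n. (y j)\<^sup>2)) / 2"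
    by (simp add: sum_divide_distrib[symmetric] sum.distrib)
  finally show ?thesis using assms by simp
qed

lemma sum_triple_fix:
  fixes F :: "nat \<times> nat \<times> nat \<Rightarrow> real"
  assumes i: "i < n" and z: "\<And>i' j k. i' \<noteq> i \<Longrightarrow> F (i', j, k) = 0"
  shows "(\<Sum>x\<in>{..<n} \<times> {..<n} \<times> {..<n}. F x) = (\<Sum>j<n. \<Sum>k<n. F (i, j, k))"
proof -
  have "(\<Sum>x\<in>{..<n} \<times> {..<n} \<times> {..<n}. F x) = (\<Sum>i'<n. \<Sum>j<n. \<Sum>k<n. F (i', j, k))"
    by (simp add: sum.cartesian_product')
  also have "\<dots> = (\<Sum>j<n. \<Sum>k<n. F (i, j, k)) + (\<Sum>i'\<in>{..<n} - {i}. \<Sum>j<n. \<Sum>k<n. F (i', j, k))"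
    using i by (subst sum.remove[of _ i]) auto
  also have "(\<Sum>i'\<in>{..<n} - {i}. \<Sum>j<n. \<Sum>k<n. F (i', j, k)) = 0"
    by (intro sum.neutral) (auto simp: z)
  finally show ?thesis by simp
qed


context
  fixes n r :: nat and Us U :: "nat \<Rightarrow> nat \<Rightarrow> real" and q :: nat and a b c :: "nat \<Rightarrow> real"
    and \<gamma> m :: real
  assumes n2: "n \<ge> 2"
    and UU1: "(\<Sum>j<n. (U j q)\<^sup>2) = 1" and a1: "(\<Sum>j<n. (a j)\<^sup>2) = 1" and b1: "(\<Sum>j<n. (b j)\<^sup>2) = 1"
    and bnd: "\<And>j. j < n \<Longrightarrow> \<bar>U j q\<bar> \<le> 2 * row_norm r Us j \<and> \<bar>a j\<bar> \<le> 2 * row_norm r Us j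
                 \<and> \<bar>b j\<bar> \<le> 2 * row_norm r Us j"
    and g0: "0 < \<gamma>" and g1: "\<gamma> \<le> 1"
    and mbig: "m \<ge> 3840 / \<gamma>\<^sup>2 * real n * ln (real n) * (Ssum n r Us)\<^sup>2"
begin

abbreviation "uu j \<equiv> row_norm r Us j"
abbreviation "\<rho> j \<equiv> row_norm r Us j powr (3/2)"
abbreviation "SS \<equiv> Ssum n r Us"
abbreviation "\<alpha> \<equiv> vinner n (\<lambda>j. U j q) a * vinner n (\<lambda>j. U j q) b"
abbreviation "tt j k \<equiv> \<alpha> * (U j q)\<^sup>2 * (U k q)\<^sup>2 - U j q * U k q * a j * b k"
abbreviation "DD \<equiv> real n * SS\<^sup>2 / m"

lemma uu_nonneg: "0 \<le> uu j"
  unfolding row_norm_def by (simp add: sum_nonneg)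

lemma rho_nonneg: "0 \<le> \<rho> j" by simp

lemma rho_eq: "\<rho> j = uu j * sqrt (uu j)"
  by (rule powr32[OF uu_nonneg])

lemma SS_pos: "0 < SS"
proof -
  have "\<exists>j<n. U j q \<noteq> 0"
  proof (rule ccontr)
    assume "\<not> ?thesis"
    then have "(\<Sum>j<n. (U j q)\<^sup>2) = 0" by (intro sum.neutral) auto
    with UU1 show False by simp
  qed
  then obtain j where j: "j < n" "U j q \<noteq> 0" by blast
  then have "0 < uu j" using bnd[OF j(1)] uu_nonneg[of j] by auto
  then have "0 < \<rho> j" by simp
  also have "\<rho> j \<le> SS" unfolding Ssum_def
    by (rule member_le_sum) (use j in auto)
  finally show ?thesis .
qed

lemma ln_pos: "0 < ln (real n)" using n2 by simp

lemma m_pos: "0 < m"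
proof -
  have "0 < 3840 / \<gamma>\<^sup>2 * real n * ln (real n) * SS\<^sup>2"
    using g0 n2 ln_pos SS_pos by (intro mult_pos_pos divide_pos_pos) auto
  with mbig show ?thesis by linarith
qed

lemma DD_pos: "0 < DD"
  using n2 SS_pos m_pos by (intro divide_pos_pos mult_pos_pos) auto

lemma DD_le: "3840 * ln (real n) * DD \<le> \<gamma>\<^sup>2"
proof -
  have "3840 * ln (real n) * real n * SS\<^sup>2 \<le> \<gamma>\<^sup>2 * m"
    using mbig g0 by (simp add: field_simps)
  then show ?thesis using m_pos by (simp add: field_simps)
qed

lemma absU1: "j < n \<Longrightarrow> \<bar>U j q\<bar> \<le> 1"
proof -
  assume j: "j < n"
  have "(U j q)\<^sup>2 \<le> (\<Sum>j<n. (U j q)\<^sup>2)" by (rule member_le_sum) (use j in auto)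
  then show ?thesis using UU1 by (simp add: abs_square_le_1)
qed

lemma abs_alpha: "\<bar>\<alpha>\<bar> \<le> 1"
proof -
  have 1: "\<bar>vinner n (\<lambda>j. U j q) x\<bar> \<le> 1" if "(\<Sum>j<n. (x j)\<^sup>2) = 1" for x
  proof -
    have "\<bar>vinner n (\<lambda>j. U j q) x\<bar> \<le> (\<Sum>j<n. \<bar>U j q * x j\<bar>)"
      unfolding vinner_def by (rule sum_abs)
    also have "\<dots> \<le> 1" by (rule sum_abs_prod_le1[OF UU1 that])
    finally show ?thesis .
  qed
  have "\<bar>\<alpha>\<bar> = \<bar>vinner n (\<lambda>j. U j q) a\<bar> * \<bar>vinner n (\<lambda>j. U j q) b\<bar>" by (simp add: abs_mult)
  also have "\<dots> \<le> 1 * 1" by (intro mult_mono 1 a1 b1) auto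
  finally show ?thesis by simp
qed

lemma t_bound1:
  "\<bar>tt j k\<bar> \<le> \<bar>U j q\<bar> * \<bar>U k q\<bar> * (\<bar>U j q\<bar> * \<bar>U k q\<bar> + \<bar>a j\<bar> * \<bar>b k\<bar>)"
proof -
  have "\<bar>tt j k\<bar> \<le> \<bar>\<alpha> * (U j q)\<^sup>2 * (U k q)\<^sup>2\<bar> + \<bar>U j q * U k q * a j * b k\<bar>"
    by (rule abs_triangle_ineq4)
  also have "\<bar>\<alpha> * (U j q)\<^sup>2 * (U k q)\<^sup>2\<bar> = \<bar>\<alpha>\<bar> * ((U j q)\<^sup>2 * (U k q)\<^sup>2)"
    by (simp add: abs_mult mult.assoc)
  also have "\<dots> \<le> 1 * ((U j q)\<^sup>2 * (U k q)\<^sup>2)"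
    by (intro mult_right_mono abs_alpha) auto
  also have "(U j q)\<^sup>2 * (U k q)\<^sup>2 = (\<bar>U j q\<bar> * \<bar>U k q\<bar>)\<^sup>2"
    by (simp add: power_mult_distrib)
  also have "1 * (\<bar>U j q\<bar> * \<bar>U k q\<bar>)\<^sup>2 + \<bar>U j q * U k q * a j * b k\<bar>
      = \<bar>U j q\<bar> * \<bar>U k q\<bar> * (\<bar>U j q\<bar> * \<bar>U k q\<bar> + \<bar>a j\<bar> * \<bar>b k\<bar>)"
    by (simp only: power2_eq_square abs_mult distrib_left mult_1_left mult.assoc)
  finally show ?thesis by simp
qed

lemma absU_sqrt: "j < n \<Longrightarrow> \<bar>U j q\<bar> \<le> sqrt 2 * sqrt (uu j)"
proof -
  assume j: "j < n"
  have "(U j q)\<^sup>2 = \<bar>U j q\<bar> * \<bar>U j q\<bar>" by (simp add: power2_eq_square)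
  also have "\<dots> \<le> 1 * (2 * uu j)" using absU1[OF j] bnd[OF j] by (intro mult_mono) auto
  finally have "sqrt ((U j q)\<^sup>2) \<le> sqrt (2 * uu j)" by (intro real_sqrt_le_mono) simp
  then show ?thesis by (simp add: real_sqrt_mult)
qed

lemma t_bound2: "j < n \<Longrightarrow> k < n \<Longrightarrow> \<bar>tt j k\<bar> \<le> 16 * \<rho> j * \<rho> k"
proof -
  assume j: "j < n" and k: "k < n"
  have h1: "\<bar>U j q\<bar> * \<bar>U k q\<bar> + \<bar>a j\<bar> * \<bar>b k\<bar> \<le> (2 * uu j) * (2 * uu k) + (2 * uu j) * (2 * uu k)"
    using bnd[OF j] bnd[OF k] by (intro add_mono mult_mono) auto
  have h2: "\<bar>U j q\<bar> * \<bar>U k q\<bar> \<le> (sqrt 2 * sqrt (uu j)) * (sqrt 2 * sqrt (uu k))"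
    using absU_sqrt[OF j] absU_sqrt[OF k] uu_nonneg[of j] uu_nonneg[of k] by (intro mult_mono) auto
  have "\<bar>U j q\<bar> * \<bar>U k q\<bar> * (\<bar>U j q\<bar> * \<bar>U k q\<bar> + \<bar>a j\<bar> * \<bar>b k\<bar>)
      \<le> ((sqrt 2 * sqrt (uu j)) * (sqrt 2 * sqrt (uu k))) * ((2 * uu j) * (2 * uu k) + (2 * uu j) * (2 * uu k))"
    by (rule mult_mono[OF h2 h1]) (use uu_nonneg[of j] uu_nonneg[of k] in auto)
  also have "\<dots> = 16 * (uu j * sqrt (uu j)) * (uu k * sqrt (uu k))"
    by (simp add: algebra_simps)
  finally show ?thesis using t_bound1[of j k] by (simp add: rho_eq)
qed

lemma p_num: "3 * real n * SS\<^sup>2 * pprob n r Us i j k = \<rho> i * \<rho> j + \<rho> j * \<rho> k + \<rho> k * \<rho> i"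
  using n2 SS_pos unfolding pprob_def by (simp add: field_simps)

lemma p_nonneg: "0 \<le> pprob n r Us i j k"
  unfolding pprob_def by (intro divide_nonneg_nonneg add_nonneg_nonneg mult_nonneg_nonneg) auto

lemma t_bound3: "j < n \<Longrightarrow> k < n \<Longrightarrow> \<bar>tt j k\<bar> \<le> 48 * real n * SS\<^sup>2 * pprob n r Us i j k"
proof -
  assume j: "j < n" and k: "k < n"
  have "\<rho> j * \<rho> k \<le> 3 * real n * SS\<^sup>2 * pprob n r Us i j k"
    unfolding p_num by (simp add: add_nonneg_nonneg)
  then show ?thesis using t_bound2[OF j k] by linarith
qed


abbreviation "ph i j k \<equiv> phat n r Us m i j k"
abbreviation "WW i j k \<equiv> Wt n r Us m i j k"

lemma ph_range: "0 \<le> ph i j k \<and> ph i j k \<le> 1"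
  unfolding phat_def using m_pos p_nonneg[of i j k] by auto

lemma ph_lt1: "ph i j k < 1 \<Longrightarrow> ph i j k = m * pprob n r Us i j k"
  unfolding phat_def by (auto simp: min_def split: if_splits)

lemma phWt: "j < n \<Longrightarrow> k < n \<Longrightarrow> ph i j k * (WW i j k * tt j k) = tt j k"
proof -
  assume j: "j < n" and k: "k < n"
  show ?thesis
  proof (cases "ph i j k > 0")
    case True
    then show ?thesis unfolding Wt_def by simp
  next
    case False
    then have ph0: "ph i j k = 0" using ph_range[of i j k] by auto
    then have "m * pprob n r Us i j k = 0" using ph_lt1[of i j k] by simp
    then have "pprob n r Us i j k = 0" using m_pos by simp
    then have "tt j k = 0" using t_bound3[OF j k, of i] by simp
    then show ?thesis by simp
  qed
qed

lemma s_bound: "j < n \<Longrightarrow> k < n \<Longrightarrow> ph i j k < 1 \<Longrightarrow> \<bar>WW i j k * tt j k\<bar> \<le> 48 * DD"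
proof -
  assume j: "j < n" and k: "k < n" and lt: "ph i j k < 1"
  show ?thesis
  proof (cases "ph i j k > 0")
    case False
    then have "WW i j k = 0" unfolding Wt_def by simp
    then show ?thesis using DD_pos by simp
  next
    case True
    have phm: "ph i j k = m * pprob n r Us i j k" by (rule ph_lt1[OF lt])
    have pp: "0 < m * pprob n r Us i j k" using True phm by simp
    have pne: "pprob n r Us i j k \<noteq> 0" using pp by auto
    have "\<bar>WW i j k * tt j k\<bar> = \<bar>tt j k\<bar> / (m * pprob n r Us i j k)"
      unfolding Wt_def using True phm m_pos p_nonneg[of i j k] by (simp add: abs_mult)
    also have "\<dots> \<le> (48 * real n * SS\<^sup>2 * pprob n r Us i j k) / (m * pprob n r Us i j k)"
      by (intro divide_right_mono t_bound3[OF j k]) (use pp in simp)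
    also have "\<dots> = 48 * DD" using pne m_pos by (simp add: field_simps)
    finally show ?thesis .
  qed
qed

lemma v_bound: "j < n \<Longrightarrow> k < n \<Longrightarrow> ph i j k < 1 \<Longrightarrow>
   ph i j k * (WW i j k * tt j k)\<^sup>2 \<le> 48 * DD * \<bar>tt j k\<bar>"
proof -
  assume j: "j < n" and k: "k < n" and lt: "ph i j k < 1"
  have "ph i j k * (WW i j k * tt j k)\<^sup>2 = (ph i j k * (WW i j k * tt j k)) * (WW i j k * tt j k)"
    by (simp add: power2_eq_square)
  also have "\<dots> = tt j k * (WW i j k * tt j k)" by (simp only: phWt[OF j k])
  also have "\<dots> \<le> \<bar>tt j k\<bar> * \<bar>WW i j k * tt j k\<bar>"
    using abs_ge_self[of "tt j k * (WW i j k * tt j k)"] by (simp only: abs_mult)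
  also have "\<dots> \<le> \<bar>tt j k\<bar> * (48 * DD)" by (intro mult_left_mono s_bound[OF j k lt]) auto
  finally show ?thesis by (simp only: mult.commute)
qed

lemma sum_tt_abs: "(\<Sum>j<n. \<Sum>k<n. \<bar>tt j k\<bar>) \<le> 2"
proof -
  have "(\<Sum>j<n. \<Sum>k<n. \<bar>tt j k\<bar>) \<le> (\<Sum>j<n. \<Sum>k<n. (U j q)\<^sup>2 * (U k q)\<^sup>2 + \<bar>U j q * a j\<bar> * \<bar>U k q * b k\<bar>)"
  proof (intro sum_mono)
    fix j k
    have "\<bar>tt j k\<bar> \<le> \<bar>U j q\<bar> * \<bar>U k q\<bar> * (\<bar>U j q\<bar> * \<bar>U k q\<bar> + \<bar>a j\<bar> * \<bar>b k\<bar>)" by (rule t_bound1)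
    also have "\<dots> = (U j q)\<^sup>2 * (U k q)\<^sup>2 + \<bar>U j q * a j\<bar> * \<bar>U k q * b k\<bar>"
      by (simp add: abs_mult algebra_simps power2_eq_square)
    finally show "\<bar>tt j k\<bar> \<le> (U j q)\<^sup>2 * (U k q)\<^sup>2 + \<bar>U j q * a j\<bar> * \<bar>U k q * b k\<bar>" .
  qed
  also have "\<dots> = (\<Sum>j<n. (U j q)\<^sup>2) * (\<Sum>k<n. (U k q)\<^sup>2) + (\<Sum>j<n. \<bar>U j q * a j\<bar>) * (\<Sum>k<n. \<bar>U k q * b k\<bar>)"
    by (simp add: sum.distrib sum_product)
  also have "\<dots> \<le> 1 * 1 + 1 * 1"
    using sum_abs_prod_le1[OF UU1 a1] sum_abs_prod_le1[OF UU1 b1] UU1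
    by (intro add_mono mult_mono) (auto intro: sum_nonneg)
  finally show ?thesis by simp
qed

lemma sum_tt: "(\<Sum>j<n. \<Sum>k<n. tt j k) = 0"
proof -
  have "(\<Sum>j<n. \<Sum>k<n. tt j k) = \<alpha> * (\<Sum>j<n. \<Sum>k<n. (U j q)\<^sup>2 * (U k q)\<^sup>2)
      - (\<Sum>j<n. \<Sum>k<n. (U j q * a j) * (U k q * b k))"
    by (simp add: sum_subtractf sum_distrib_left algebra_simps)
  also have "\<dots> = \<alpha> * ((\<Sum>j<n. (U j q)\<^sup>2) * (\<Sum>k<n. (U k q)\<^sup>2))
      - (\<Sum>j<n. U j q * a j) * (\<Sum>k<n. U k q * b k)"
    by (simp only: sum_product)
  also have "\<dots> = 0" unfolding UU1 by (simp add: vinner_def)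
  finally show ?thesis .
qed


lemma tail:
  assumes i: "i < n"
  shows "measure_pmf.prob (delta_pmf n r Us m)
     {\<delta>. \<gamma> < \<bar>\<alpha> * Bdiag n r Us m U q \<delta> i - Rdiag n r Us m U q a b \<delta> i\<bar>} \<le> 2 * real n powr (-10)"
proof -
  define P where "P x = phat n r Us m (fst x) (fst (snd x)) (snd (snd x))" for x :: "nat \<times> nat \<times> nat"
  define I where "I = {..<n} \<times> {..<n} \<times> {..<n}"
  define s where "s x = (if fst x = i then WW i (fst (snd x)) (snd (snd x)) * tt (fst (snd x)) (snd (snd x)) else 0)"
    for x :: "nat \<times> nat \<times> nat"
  define l where "l = \<gamma> / (192 * DD)"
  have Deq: "delta_pmf n r Us m = Pi_pmf I False (\<lambda>x. bernoulli_pmf (P x))"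
    unfolding delta_pmf_def I_def
    by (rule arg_cong[where f = "Pi_pmf _ False"]) (auto simp: fun_eq_iff P_def)
  have finI: "finite I" unfolding I_def by simp
  have Prange: "\<And>x. x \<in> I \<Longrightarrow> 0 \<le> P x \<and> P x \<le> 1" unfolding P_def using ph_range by blast
  have lpos: "0 < l" unfolding l_def using g0 DD_pos by (intro divide_pos_pos) auto
  have sb: "\<And>x. x \<in> I \<Longrightarrow> P x < 1 \<Longrightarrow> \<bar>s x\<bar> \<le> 48 * DD"
    unfolding I_def P_def s_def using s_bound DD_pos by auto
  have ls: "\<And>x. x \<in> I \<Longrightarrow> P x < 1 \<Longrightarrow> \<bar>l * s x\<bar> \<le> 1"
  proof -
    fix x assume x: "x \<in> I" "P x < 1"
    have "\<bar>l * s x\<bar> = l * \<bar>s x\<bar>" using lpos by (simp add: abs_mult)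
    also have "\<dots> \<le> l * (48 * DD)" using sb[OF x] lpos by (intro mult_left_mono) auto
    also have "\<dots> = \<gamma> / 4" unfolding l_def using DD_pos SS_pos m_pos n2 by (simp add: field_simps)
    also have "\<dots> \<le> 1" using g1 by simp
    finally show "\<bar>l * s x\<bar> \<le> 1" .
  qed
  have ls': "\<And>x. x \<in> I \<Longrightarrow> P x < 1 \<Longrightarrow> \<bar>l * (- s x)\<bar> \<le> 1" using ls by simp
  have V: "(\<Sum>x\<in>I. if P x < 1 then P x * (s x)\<^sup>2 else 0) \<le> 96 * DD"
  proof -
    have "(\<Sum>x\<in>I. if P x < 1 then P x * (s x)\<^sup>2 else 0)
        = (\<Sum>j<n. \<Sum>k<n. if ph i j k < 1 then ph i j k * (WW i j k * tt j k)\<^sup>2 else 0)"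
      unfolding I_def s_def P_def by (subst sum_triple_fix[OF i]) (simp_all cong: if_cong)
    also have "\<dots> \<le> (\<Sum>j<n. \<Sum>k<n. 48 * DD * \<bar>tt j k\<bar>)"
    proof (intro sum_mono)
      fix j k assume j: "j \<in> {..<n}" and k: "k \<in> {..<n}"
      have nn: "0 \<le> 48 * DD * \<bar>tt j k\<bar>" using DD_pos by (intro mult_nonneg_nonneg) auto
      show "(if ph i j k < 1 then ph i j k * (WW i j k * tt j k)\<^sup>2 else 0) \<le> 48 * DD * \<bar>tt j k\<bar>"
        using v_bound[of j k i] j k nn by auto
    qed
    also have "\<dots> = 48 * DD * (\<Sum>j<n. \<Sum>k<n. \<bar>tt j k\<bar>)" by (simp add: sum_distrib_left)
    also have "\<dots> \<le> 48 * DD * 2" using sum_tt_abs DD_pos by (intro mult_left_mono) auto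
    finally show ?thesis by simp
  qed
  have Zeq: "(\<Sum>x\<in>I. (of_bool (\<delta> x) - P x) * s x) = \<alpha> * Bdiag n r Us m U q \<delta> i - Rdiag n r Us m U q a b \<delta> i"
    for \<delta> :: "nat \<times> nat \<times> nat \<Rightarrow> bool"
  proof -
    have "(\<Sum>x\<in>I. (of_bool (\<delta> x) - P x) * s x)
        = (\<Sum>j<n. \<Sum>k<n. (of_bool (\<delta> (i,j,k)) - ph i j k) * (WW i j k * tt j k))"
      unfolding I_def s_def P_def by (subst sum_triple_fix[OF i]) (simp_all cong: if_cong)
    also have "\<dots> = (\<Sum>j<n. \<Sum>k<n. of_bool (\<delta> (i,j,k)) * WW i j k * tt j k - tt j k)"
    proof (intro sum.cong refl)
      fix j k assume "j \<in> {..<n}" "k \<in> {..<n}"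
      then have "ph i j k * (WW i j k * tt j k) = tt j k" by (intro phWt) auto
      then show "(of_bool (\<delta> (i,j,k)) - ph i j k) * (WW i j k * tt j k) = of_bool (\<delta> (i,j,k)) * WW i j k * tt j k - tt j k"
      proof -
        have "(of_bool (\<delta> (i,j,k)) - ph i j k) * (WW i j k * tt j k)
            = of_bool (\<delta> (i,j,k)) * (WW i j k * tt j k) - ph i j k * (WW i j k * tt j k)"
          by (rule left_diff_distrib)
        also have "ph i j k * (WW i j k * tt j k) = tt j k" by fact
        also have "of_bool (\<delta> (i,j,k)) * (WW i j k * tt j k) = of_bool (\<delta> (i,j,k)) * WW i j k * tt j k"
          by (rule mult.assoc[symmetric])
        finally show ?thesis .
      qed
    qed
    also have "\<dots> = (\<Sum>j<n. \<Sum>k<n. of_bool (\<delta> (i,j,k)) * WW i j k * tt j k) - (\<Sum>j<n. \<Sum>k<n. tt j k)"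
      by (simp add: sum_subtractf)
    also have "(\<Sum>j<n. \<Sum>k<n. tt j k) = 0" by (rule sum_tt)
    also have "(\<Sum>j<n. \<Sum>k<n. of_bool (\<delta> (i,j,k)) * WW i j k * tt j k) = \<alpha> * Bdiag n r Us m U q \<delta> i - Rdiag n r Us m U q a b \<delta> i"
      unfolding Bdiag_def Rdiag_def by (simp add: sum_distrib_left sum_subtractf algebra_simps)
    finally show ?thesis by simp
  qed
  have E: "exp (l\<^sup>2 * V0 - l * \<gamma>) \<le> real n powr (-10)" if V0: "V0 \<le> 96 * DD" for V0
  proof -
    have "l\<^sup>2 * V0 - l * \<gamma> \<le> l\<^sup>2 * (96 * DD) - l * \<gamma>"
      using V0 by (intro diff_right_mono mult_left_mono) auto
    also have "\<dots> = - (\<gamma>\<^sup>2 / (384 * DD))"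
      unfolding l_def using DD_pos SS_pos m_pos n2 by (simp add: field_simps power2_eq_square)
    also have "\<dots> \<le> - 10 * ln (real n)"
      using DD_le DD_pos SS_pos m_pos n2 by (simp add: field_simps)
    finally have "exp (l\<^sup>2 * V0 - l * \<gamma>) \<le> exp (- 10 * ln (real n))" by simp
    also have "exp (- 10 * ln (real n)) = real n powr (-10)"
      using n2 by (simp add: powr_def)
    finally show ?thesis .
  qed
  have c1: "measure_pmf.prob (delta_pmf n r Us m) {\<delta>. (\<Sum>x\<in>I. (of_bool (\<delta> x) - P x) * s x) \<ge> \<gamma>}
      \<le> real n powr (-10)"
    unfolding Deq by (rule order_trans[OF chernoff_pi[OF finI Prange lpos ls] E[OF V]])
  have V2: "(\<Sum>x\<in>I. if P x < 1 then P x * (- s x)\<^sup>2 else 0) \<le> 96 * DD"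
    using V by (simp cong: if_cong)
  have c2: "measure_pmf.prob (delta_pmf n r Us m) {\<delta>. (\<Sum>x\<in>I. (of_bool (\<delta> x) - P x) * (- s x)) \<ge> \<gamma>}
      \<le> real n powr (-10)"
    unfolding Deq by (rule order_trans[OF chernoff_pi[OF finI Prange lpos ls'] E[OF V2]])
  have sub: "{\<delta>. \<gamma> < \<bar>\<alpha> * Bdiag n r Us m U q \<delta> i - Rdiag n r Us m U q a b \<delta> i\<bar>}
     \<subseteq> {\<delta>. (\<Sum>x\<in>I. (of_bool (\<delta> x) - P x) * s x) \<ge> \<gamma>} \<union> {\<delta>. (\<Sum>x\<in>I. (of_bool (\<delta> x) - P x) * (- s x)) \<ge> \<gamma>}"
    by (auto simp: Zeq sum_negf uminus_apply)
  have "measure_pmf.prob (delta_pmf n r Us m)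
     {\<delta>. \<gamma> < \<bar>\<alpha> * Bdiag n r Us m U q \<delta> i - Rdiag n r Us m U q a b \<delta> i\<bar>}
     \<le> measure_pmf.prob (delta_pmf n r Us m) ({\<delta>. (\<Sum>x\<in>I. (of_bool (\<delta> x) - P x) * s x) \<ge> \<gamma>} \<union> {\<delta>. (\<Sum>x\<in>I. (of_bool (\<delta> x) - P x) * (- s x)) \<ge> \<gamma>})"
    by (rule measure_pmf.finite_measure_mono[OF sub]) simp
  also have "\<dots> \<le> measure_pmf.prob (delta_pmf n r Us m) {\<delta>. (\<Sum>x\<in>I. (of_bool (\<delta> x) - P x) * s x) \<ge> \<gamma>}
     + measure_pmf.prob (delta_pmf n r Us m) {\<delta>. (\<Sum>x\<in>I. (of_bool (\<delta> x) - P x) * (- s x)) \<ge> \<gamma>}"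
    by (rule measure_Un_le) simp_all
  also have "\<dots> \<le> real n powr (-10) + real n powr (-10)" using c1 c2 by (rule add_mono)
  finally show ?thesis by simp
qed


lemma main_ctx:
  assumes c1: "(\<Sum>j<n. (c j)\<^sup>2) = 1"
  shows "measure_pmf.prob (delta_pmf n r Us m)
      {\<delta>. vnorm n (\<lambda>i.
              (vinner n (\<lambda>j. U j q) a * vinner n (\<lambda>j. U j q) b * Bdiag n r Us m U q \<delta> i
               - Rdiag n r Us m U q a b \<delta> i) * c i)
           \<le> \<gamma> * vnorm n b}
      \<ge> 1 - 2 * real n powr (-9)"
proof -
  define D where "D = delta_pmf n r Us m"
  define Z where "Z \<delta> i = \<alpha> * Bdiag n r Us m U q \<delta> i - Rdiag n r Us m U q a b \<delta> i" for \<delta> i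
  define A where "A i = {\<delta>. \<gamma> < \<bar>Z \<delta> i\<bar>}" for i
  have vb: "vnorm n b = 1" unfolding vnorm_def using b1 by simp
  have bad: "measure_pmf.prob D (\<Union>i\<in>{..<n}. A i) \<le> (\<Sum>i\<in>{..<n}. measure_pmf.prob D (A i))"
    by (rule measure_pmf.finite_measure_subadditive_finite) auto
  also have "\<dots> \<le> of_nat (card {..<n}) * (2 * real n powr (-10))"
    by (rule sum_bounded_above) (simp add: A_def D_def Z_def tail)
  also have "\<dots> = 2 * (real n * real n powr (-10))" by simp
  also have "real n * real n powr (-10) = real n powr (-9)"
    using n2 by (simp add: powr_mult_base)
  finally have bad2: "measure_pmf.prob D (\<Union>i\<in>{..<n}. A i) \<le> 2 * real n powr (-9)" .
  have sub: "UNIV - (\<Union>i\<in>{..<n}. A i) \<subseteq>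
      {\<delta>. vnorm n (\<lambda>i. (vinner n (\<lambda>j. U j q) a * vinner n (\<lambda>j. U j q) b * Bdiag n r Us m U q \<delta> i
               - Rdiag n r Us m U q a b \<delta> i) * c i) \<le> \<gamma> * vnorm n b}"
  proof
    fix \<delta> assume "\<delta> \<in> UNIV - (\<Union>i\<in>{..<n}. A i)"
    then have zi: "\<And>i. i < n \<Longrightarrow> \<bar>Z \<delta> i\<bar> \<le> \<gamma>" unfolding A_def by force
    have "(\<Sum>i<n. (Z \<delta> i * c i)\<^sup>2) \<le> (\<Sum>i<n. \<gamma>\<^sup>2 * (c i)\<^sup>2)"
    proof (intro sum_mono)
      fix i assume "i \<in> {..<n}"
      then have "\<bar>Z \<delta> i\<bar> \<le> \<gamma>" using zi by simp
      then have "(Z \<delta> i)\<^sup>2 \<le> \<gamma>\<^sup>2" by (simp add: abs_le_square_iff[symmetric] abs_of_pos[OF g0])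
      then show "(Z \<delta> i * c i)\<^sup>2 \<le> \<gamma>\<^sup>2 * (c i)\<^sup>2"
        by (simp add: power_mult_distrib mult_right_mono)
    qed
    also have "\<dots> = \<gamma>\<^sup>2" using c1 by (simp add: sum_distrib_left[symmetric])
    finally have "sqrt (\<Sum>i<n. (Z \<delta> i * c i)\<^sup>2) \<le> sqrt (\<gamma>\<^sup>2)" by (rule real_sqrt_le_mono)
    also have "sqrt (\<gamma>\<^sup>2) = \<gamma> * vnorm n b" using g0 vb by simp
    finally show "\<delta> \<in> {\<delta>. vnorm n (\<lambda>i. (vinner n (\<lambda>j. U j q) a * vinner n (\<lambda>j. U j q) b * Bdiag n r Us m U q \<delta> i
               - Rdiag n r Us m U q a b \<delta> i) * c i) \<le> \<gamma> * vnorm n b}"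
      unfolding vnorm_def Z_def by simp
  qed
  have "1 - 2 * real n powr (-9) \<le> 1 - measure_pmf.prob D (\<Union>i\<in>{..<n}. A i)" using bad2 by simp
  also have "\<dots> = measure_pmf.prob D (UNIV - (\<Union>i\<in>{..<n}. A i))"
    using measure_pmf.prob_compl[of "\<Union>i\<in>{..<n}. A i" D] by simp
  also have "\<dots> \<le> measure_pmf.prob D {\<delta>. vnorm n (\<lambda>i. (vinner n (\<lambda>j. U j q) a * vinner n (\<lambda>j. U j q) b * Bdiag n r Us m U q \<delta> i
               - Rdiag n r Us m U q a b \<delta> i) * c i) \<le> \<gamma> * vnorm n b}"
    by (rule measure_pmf.finite_measure_mono[OF sub]) simp
  finally show ?thesis unfolding D_def .
qed

end

theorem mainTheorem8:
  "\<exists>C>0. \<forall>(n::nat) (r::nat) (Us::nat \<Rightarrow> nat \<Rightarrow> real) (U::nat \<Rightarrow> nat \<Rightarrow> real) (q::nat)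
      (a::nat \<Rightarrow> real) (b::nat \<Rightarrow> real) (c::nat \<Rightarrow> real) (\<gamma>::real) (m::real).
    orthonormal_cols n r Us \<longrightarrow>
    (\<forall>l<r. vnorm n (\<lambda>i. U i l) = 1) \<longrightarrow>
    (\<forall>i<n. \<forall>l<r. \<bar>U i l\<bar> \<le> 2 * row_norm r Us i) \<longrightarrow>
    q < r \<longrightarrow>
    vnorm n a = 1 \<longrightarrow> vnorm n b = 1 \<longrightarrow> vnorm n c = 1 \<longrightarrow>
    (\<forall>i<n. \<bar>a i\<bar> \<le> 2 * row_norm r Us i \<and> \<bar>b i\<bar> \<le> 2 * row_norm r Us i
           \<and> \<bar>c i\<bar> \<le> 2 * row_norm r Us i) \<longrightarrow>
    0 < \<gamma> \<longrightarrow> \<gamma> \<le> 1 \<longrightarrow>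
    m \<ge> C / \<gamma>\<^sup>2 * real n * ln (real n) * (Ssum n r Us)\<^sup>2 \<longrightarrow>
    measure_pmf.prob (delta_pmf n r Us m)
      {\<delta>. vnorm n (\<lambda>i.
              (vinner n (\<lambda>j. U j q) a * vinner n (\<lambda>j. U j q) b * Bdiag n r Us m U q \<delta> i
               - Rdiag n r Us m U q a b \<delta> i) * c i)
           \<le> \<gamma> * vnorm n b}
      \<ge> 1 - 2 * real n powr (-9)"
  proof (intro exI[of _ 3840] conjI allI impI)
  show "(0::real) < 3840" by simp
next
  fix n r :: nat and Us U :: "nat \<Rightarrow> nat \<Rightarrow> real" and q :: nat and a b c :: "nat \<Rightarrow> real"
    and \<gamma> m :: real
  assume oc: "orthonormal_cols n r Us"
    and Ucol: "\<forall>l<r. vnorm n (\<lambda>i. U i l) = 1"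
    and Ub: "\<forall>i<n. \<forall>l<r. \<bar>U i l\<bar> \<le> 2 * row_norm r Us i"
    and q: "q < r"
    and av: "vnorm n a = 1" and bv: "vnorm n b = 1" and cv: "vnorm n c = 1"
    and abc: "\<forall>i<n. \<bar>a i\<bar> \<le> 2 * row_norm r Us i \<and> \<bar>b i\<bar> \<le> 2 * row_norm r Us i
           \<and> \<bar>c i\<bar> \<le> 2 * row_norm r Us i"
    and g0: "0 < \<gamma>" and g1: "\<gamma> \<le> 1"
    and mbig: "m \<ge> 3840 / \<gamma>\<^sup>2 * real n * ln (real n) * (Ssum n r Us)\<^sup>2"
  have sq1: "(\<Sum>j<n. (x j)\<^sup>2) = 1" if "vnorm n x = 1" for x
    using that unfolding vnorm_def by simp
  show "measure_pmf.prob (delta_pmf n r Us m)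
      {\<delta>. vnorm n (\<lambda>i.
              (vinner n (\<lambda>j. U j q) a * vinner n (\<lambda>j. U j q) b * Bdiag n r Us m U q \<delta> i
               - Rdiag n r Us m U q a b \<delta> i) * c i)
           \<le> \<gamma> * vnorm n b}
      \<ge> 1 - 2 * real n powr (-9)"
  proof (cases "n \<ge> 2")
    case True
    show ?thesis
    proof (rule main_ctx[OF True])
      show "(\<Sum>j<n. (U j q)\<^sup>2) = 1" using Ucol q by (intro sq1) auto
      show "(\<Sum>j<n. (a j)\<^sup>2) = 1" by (rule sq1[OF av])
      show "(\<Sum>j<n. (b j)\<^sup>2) = 1" by (rule sq1[OF bv])
      show "(\<Sum>j<n. (c j)\<^sup>2) = 1" by (rule sq1[OF cv])
      show "\<And>j. j < n \<Longrightarrow> \<bar>U j q\<bar> \<le> 2 * row_norm r Us j \<and> \<bar>a j\<bar> \<le> 2 * row_norm r Us j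
                 \<and> \<bar>b j\<bar> \<le> 2 * row_norm r Us j" using Ub abc q by blast
    qed fact+
  next
    case False
    then have "n = 0 \<or> n = 1" by auto
    then show ?thesis
    proof
      assume "n = 0"
      then have False using av unfolding vnorm_def by simp
      then show ?thesis ..
    next
      assume n1: "n = 1"
      have "1 - 2 * real n powr (-9) \<le> 0" using n1 by simp
      also have "0 \<le> measure_pmf.prob (delta_pmf n r Us m) {\<delta>. vnorm n (\<lambda>i.
              (vinner n (\<lambda>j. U j q) a * vinner n (\<lambda>j. U j q) b * Bdiag n r Us m U q \<delta> i
               - Rdiag n r Us m U q a b \<delta> i) * c i)
           \<le> \<gamma> * vnorm n b}" by simp
      finally show ?thesis .
    qed
  qed
qed

end
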